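(* Let $w:\mathbb{R}\to(0,\infty)$ be a positive weighting function (depending on fixed parameters $\bm\theta$) such that $\int_{\mathbb{R}}k_s(y;x)w(y)\,\mathrm{d}y<\infty$ for all $x\in\mathbb{R}$ and $s>0$, where $k_s(\cdot;x)$ is the Gaussian density with mean $x$ and standard deviation $s$. Let $\sigma>0$. Define $$p_1(x\mid y,s,\bm\theta)=\frac{k_s(x;y)\,w(x)}{\int_{\mathbb{R}}k_s(z;y)\,w(z)\,\mathrm{d}z},\qquad p_2(x\mid y,\sigma,\bm\theta)=\int_{\mathbb{R}}p_1(x\mid z,\sigma,\bm\theta)\,p_1(z\mid y,\sigma,\bm\theta)\,\mathrm{d}z.$$ Then for all $x_1,x_2\in\mathbb{R}$, $$p_2(x_1\mid x_2,\sigma,\bm\theta)=p_1(x_1\mid x_2,\sqrt2\,\sigma,\bm\theta)\cdot v(x_1,x_2),$$ where $$v(x_1,x_2)=\frac{\int_{\mathbb{R}}k_{\sqrt2\sigma}(y;x_2)\,w(y)\,\mathrm{d}y}{\int_{\mathbb{R}}k_{\sigma}(y;x_2)\,w(y)\,\mathrm{d}y}\int_{\mathbb{R}}k_{\sigma/\sqrt2}\Bigl(z;\tfrac12(x_1+x_2)\Bigr)\frac{w(z)}{\int_{\mathbb{R}}k_\sigma(y;z)\,w(y)\,\mathrm{d}y}\,\mathrm{d}z.$$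
   Context: $p_1$ is the one-step transition density of a one-dimensional discrete-time spatially-explicit random walk (Gaussian kernel times weighting function, renormalized), and $p_2$ is its two-step transition density. Here $x_1$ is the location at time $t$ and $x_2$ the location at time $t-2\tau$. *)

theory Defs
  imports "HOL-Probability.Probability"
begin

definition gkern :: "real \<Rightarrow> real \<Rightarrow> real \<Rightarrow> real" where
  "gkern s y x = normal_density x s y"

definition p1 :: "(real \<Rightarrow> real) \<Rightarrow> real \<Rightarrow> real \<Rightarrow> real \<Rightarrow> real" where
  "p1 w x y s = gkern s x y * w x / (\<integral>z. gkern s z y * w z \<partial>lborel)"

definition p2 :: "(real \<Rightarrow> real) \<Rightarrow> real \<Rightarrow> real \<Rightarrow> real \<Rightarrow> real" where
  "p2 w x y \<sigma> = (\<integral>z. p1 w x z \<sigma> * p1 w z y \<sigma> \<partial>lborel)"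

definition vfac :: "(real \<Rightarrow> real) \<Rightarrow> real \<Rightarrow> real \<Rightarrow> real \<Rightarrow> real" where
  "vfac w \<sigma> x1 x2 =
     (\<integral>y. gkern (sqrt 2 * \<sigma>) y x2 * w y \<partial>lborel) / (\<integral>y. gkern \<sigma> y x2 * w y \<partial>lborel)
     * (\<integral>z. gkern (\<sigma> / sqrt 2) z ((x1 + x2) / 2) * (w z / (\<integral>y. gkern \<sigma> y z * w y \<partial>lborel)) \<partial>lborel)"

end

theory Submission
  imports Defs
begin

lemma gauss_prod:
  assumes s: "(s::real) > 0"
  shows "gkern s a z * gkern s z b = gkern (sqrt 2 * s) a b * gkern (s / sqrt 2) z ((a + b) / 2)"
proof -
  have e: "-(a - z)\<^sup>2 / (2 * s\<^sup>2) + -(z - b)\<^sup>2 / (2 * s\<^sup>2)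
     = -(a - b)\<^sup>2 / (2 * (sqrt 2 * s)\<^sup>2) + -(z - (a + b) / 2)\<^sup>2 / (2 * (s / sqrt 2)\<^sup>2)"
  proof -
    have a: "(sqrt 2 * s)\<^sup>2 = 2 * s\<^sup>2" by (simp add: power_mult_distrib)
    have b: "(s / sqrt 2)\<^sup>2 = s\<^sup>2 / 2" by (simp add: power_divide)
    have n: "s\<^sup>2 \<noteq> 0" using s by simp
    have "-(a - b)\<^sup>2 / (2 * (2 * s\<^sup>2)) + -(z - (a + b) / 2)\<^sup>2 / (2 * (s\<^sup>2 / 2))
        = (-(a - z)\<^sup>2 + -(z - b)\<^sup>2) / (2 * s\<^sup>2)"
      using n by (simp add: divide_simps) (simp add: power2_eq_square algebra_simps)
    then show ?thesis unfolding a b by (simp add: add_divide_distrib diff_divide_distrib)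
  qed
  have p: "1 / sqrt (2 * pi * s\<^sup>2) * (1 / sqrt (2 * pi * s\<^sup>2))
     = 1 / sqrt (2 * pi * (sqrt 2 * s)\<^sup>2) * (1 / sqrt (2 * pi * (s / sqrt 2)\<^sup>2))"
  proof -
    have "sqrt (2 * pi * (sqrt 2 * s)\<^sup>2) * sqrt (2 * pi * (s / sqrt 2)\<^sup>2)
        = sqrt ((2 * pi * (sqrt 2 * s)\<^sup>2) * (2 * pi * (s / sqrt 2)\<^sup>2))"
      by (rule real_sqrt_mult[symmetric])
    also have "(2 * pi * (sqrt 2 * s)\<^sup>2) * (2 * pi * (s / sqrt 2)\<^sup>2) = (2 * pi * s\<^sup>2) * (2 * pi * s\<^sup>2)"
    proof -
      have a: "(sqrt 2 * s)\<^sup>2 = 2 * s\<^sup>2" by (simp add: power_mult_distrib)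
      have b: "(s / sqrt 2)\<^sup>2 = s\<^sup>2 / 2" by (simp add: power_divide)
      show ?thesis unfolding a b by simp
    qed
    also have "sqrt ((2 * pi * s\<^sup>2) * (2 * pi * s\<^sup>2)) = sqrt (2 * pi * s\<^sup>2) * sqrt (2 * pi * s\<^sup>2)"
      by (simp add: real_sqrt_mult)
    finally show ?thesis by simp
  qed
  show ?thesis
  proof -
    let ?A = "1 / sqrt (2 * pi * s\<^sup>2)"
    have "?A * exp (-(a - z)\<^sup>2 / (2 * s\<^sup>2)) * (?A * exp (-(z - b)\<^sup>2 / (2 * s\<^sup>2)))
        = (?A * ?A) * exp (-(a - z)\<^sup>2 / (2 * s\<^sup>2) + -(z - b)\<^sup>2 / (2 * s\<^sup>2))"
      by (simp only: exp_add mult_ac)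
    also have "\<dots> = (1 / sqrt (2 * pi * (sqrt 2 * s)\<^sup>2) * (1 / sqrt (2 * pi * (s / sqrt 2)\<^sup>2)))
       * exp (-(a - b)\<^sup>2 / (2 * (sqrt 2 * s)\<^sup>2) + -(z - (a + b) / 2)\<^sup>2 / (2 * (s / sqrt 2)\<^sup>2))"
      by (simp only: e p)
    also have "\<dots> = 1 / sqrt (2 * pi * (sqrt 2 * s)\<^sup>2) * exp (-(a - b)\<^sup>2 / (2 * (sqrt 2 * s)\<^sup>2))
       * (1 / sqrt (2 * pi * (s / sqrt 2)\<^sup>2) * exp (-(z - (a + b) / 2)\<^sup>2 / (2 * (s / sqrt 2)\<^sup>2)))"
      by (simp only: exp_add mult_ac)
    finally show ?thesis by (simp only: gkern_def normal_density_def)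
  qed
qed

theorem proposition1:
  fixes w :: "real \<Rightarrow> real" and \<sigma> :: real
  assumes w_pos: "\<And>x. w x > 0"
    and w_int: "\<And>x s. s > 0 \<Longrightarrow> integrable lborel (\<lambda>y. gkern s y x * w y)"
    and sigma_pos: "\<sigma> > 0"
  shows "\<forall>x1 x2. p2 w x1 x2 \<sigma> = p1 w x1 x2 (sqrt 2 * \<sigma>) * vfac w \<sigma> x1 x2"
proof (intro allI)
  fix x1 x2
  define W where "W = (\<lambda>z. \<integral>y. gkern \<sigma> y z * w y \<partial>lborel)"
  define W2 where "W2 = (\<integral>y. gkern (sqrt 2 * \<sigma>) y x2 * w y \<partial>lborel)"
  define F where "F = (\<lambda>z. gkern (\<sigma> / sqrt 2) z ((x1 + x2) / 2) * (w z / W z))"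
  define C where "C = gkern (sqrt 2 * \<sigma>) x1 x2 * w x1 / W x2"
  have s2: "sqrt 2 * \<sigma> > 0" using sigma_pos by simp
  have W2pos: "W2 \<noteq> 0"
  proof
    assume "W2 = 0"
    hence "AE y in lborel. gkern (sqrt 2 * \<sigma>) y x2 * w y = 0"
      unfolding W2_def
      using integral_nonneg_eq_0_iff_AE[OF w_int[OF s2]] w_pos
      by (simp add: gkern_def normal_density_nonneg less_imp_le)
    moreover have "\<And>y. gkern (sqrt 2 * \<sigma>) y x2 * w y \<noteq> 0"
      using w_pos s2 sigma_pos by (simp add: gkern_def normal_density_def less_imp_neq[symmetric])
    ultimately have "AE (y::real) in lborel. False" by (auto elim: AE_mp)
    hence "ae_filter (lborel::real measure) = bot" using trivial_limit_def by blast
    thus False using ae_filter_eq_bot_iff[of "lborel::real measure"] by simp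
  qed
  have "p2 w x1 x2 \<sigma> = (\<integral>z. C * F z \<partial>lborel)"
    unfolding p2_def
  proof (rule Bochner_Integration.integral_cong[OF refl])
    fix z
    show "p1 w x1 z \<sigma> * p1 w z x2 \<sigma> = C * F z"
      unfolding p1_def C_def F_def W_def
      using gauss_prod[OF sigma_pos, of x1 z x2]
      by (simp add: field_simps)
  qed
  also have "\<dots> = C * (\<integral>z. F z \<partial>lborel)" by simp
  also have "\<dots> = p1 w x1 x2 (sqrt 2 * \<sigma>) * vfac w \<sigma> x1 x2"
  proof -
    have v: "vfac w \<sigma> x1 x2 = W2 / W x2 * (\<integral>z. F z \<partial>lborel)"
      by (simp add: vfac_def W2_def W_def F_def)
    have q: "p1 w x1 x2 (sqrt 2 * \<sigma>) = gkern (sqrt 2 * \<sigma>) x1 x2 * w x1 / W2"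
      by (simp add: p1_def W2_def)
    show ?thesis unfolding v q C_def using W2pos by (simp add: field_simps)
  qed
  finally show "p2 w x1 x2 \<sigma> = p1 w x1 x2 (sqrt 2 * \<sigma>) * vfac w \<sigma> x1 x2" .
qed

end
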